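(* Let $q\ge3$ be a prime power and let $\{P_i\}$ be an infinite family of toric codes over $\mathbb{F}_q$, with $P_i\subseteq[0,q-2]^{n_i}$. If there is $I$ such that $L(P_i)\le q-3$ for all $i\ge I$, then $R(P_i)\to0$ as $i\to\infty$.
   Context: For an integral convex polytope $P\subseteq[0,q-2]^n$, $R(P)=|P\cap\mathbb{Z}^n|/(q-1)^n$ and $\delta(P)=\big((q-1)^n-N(P)\big)/(q-1)^n$, where $N(P)$ is the maximum number of zeros in $(\mathbb{F}_q^\times)^n$ of a nonzero $\mathbb{F}_q$-linear combination of the monomials $x^p$, $p\in P\cap\mathbb{Z}^n$. A sequence of nonempty integral convex polytopes $P_i\subseteq[0,q-2]^{n_i}$ is an infinite family of toric codes if $n_i\to\infty$ and $\delta(P_i)$, $R(P_i)$ converge. The Minkowski length $\ell(P)$ is the largest number of summands in a decomposition of $P$ as a Minkowski sum of lattice polytopes of positive dimension ($\ell=0$ for a point); the full Minkowski length is $L(P)=\max\{\ell(Q):Q\subseteq P\text{ a lattice polytope}\}$. *)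

theory Defs
  imports "HOL-Analysis.Analysis"
begin

text \<open>Points of R^n are modelled as functions nat => real that vanish at coordinates >= n;
  integer points as functions nat => int vanishing at coordinates >= n.\<close>

definition int_pts :: "nat \<Rightarrow> (nat \<Rightarrow> int) set" where
  "int_pts n = {p. \<forall>i\<ge>n. p i = 0}"

definition rvec :: "(nat \<Rightarrow> int) \<Rightarrow> (nat \<Rightarrow> real)" where
  "rvec p = (\<lambda>i. real_of_int (p i))"

definition conv_hull :: "(nat \<Rightarrow> real) set \<Rightarrow> (nat \<Rightarrow> real) set" where
  "conv_hull V = {x. \<exists>c. (\<forall>v\<in>V. 0 \<le> c v) \<and> sum c V = 1 \<and>
                        x = (\<lambda>j. \<Sum>v\<in>V. c v * v j)}"

definition lattice_polytope :: "nat \<Rightarrow> (nat \<Rightarrow> real) set \<Rightarrow> bool" where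
  "lattice_polytope n P \<longleftrightarrow> (\<exists>V. finite V \<and> V \<noteq> {} \<and> V \<subseteq> int_pts n \<and> P = conv_hull (rvec ` V))"

definition lat_pts :: "nat \<Rightarrow> (nat \<Rightarrow> real) set \<Rightarrow> (nat \<Rightarrow> int) set" where
  "lat_pts n P = {p \<in> int_pts n. rvec p \<in> P}"

definition msum :: "(nat \<Rightarrow> real) set \<Rightarrow> (nat \<Rightarrow> real) set \<Rightarrow> (nat \<Rightarrow> real) set" where
  "msum A B = {(\<lambda>j. a j + b j) | a b. a \<in> A \<and> b \<in> B}"

fun msum_n :: "(nat \<Rightarrow> (nat \<Rightarrow> real) set) \<Rightarrow> nat \<Rightarrow> (nat \<Rightarrow> real) set" where
  "msum_n Q 0 = {(\<lambda>j. 0)}"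
| "msum_n Q (Suc k) = msum (msum_n Q k) (Q k)"

text \<open>The translate
  only matters for k = 0 (P a point, giving l = 0); for k >= 1 it can be absorbed in a summand.\<close>
definition mink_length :: "nat \<Rightarrow> (nat \<Rightarrow> real) set \<Rightarrow> nat" where
  "mink_length n P = Max {k. \<exists>Q t. t \<in> int_pts n \<and>
       (\<forall>j<k. lattice_polytope n (Q j) \<and> \<not> (\<exists>x. Q j = {x})) \<and>
       P = msum {rvec t} (msum_n Q k)}"

definition full_mink_length :: "nat \<Rightarrow> (nat \<Rightarrow> real) set \<Rightarrow> nat" where
  "full_mink_length n P = Max {mink_length n Q | Q. lattice_polytope n Q \<and> Q \<subseteq> P}"

definition toric_polytope :: "nat \<Rightarrow> nat \<Rightarrow> (nat \<Rightarrow> real) set \<Rightarrow> bool" where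
  "toric_polytope q n P \<longleftrightarrow> lattice_polytope n P \<and>
      (\<forall>x\<in>P. \<forall>i<n. 0 \<le> x i \<and> x i \<le> real q - 2)"

definition torus :: "nat \<Rightarrow> (nat \<Rightarrow> 'a::field) set" where
  "torus n = {x. (\<forall>i<n. x i \<noteq> 0) \<and> (\<forall>i\<ge>n. x i = 1)}"

definition monomial_eval :: "nat \<Rightarrow> (nat \<Rightarrow> int) \<Rightarrow> (nat \<Rightarrow> 'a::field) \<Rightarrow> 'a" where
  "monomial_eval n p x = (\<Prod>i<n. x i ^ nat (p i))"

text \<open>N(P): maximal number of zeros on the torus of a nonzero F_q-linear combination of the
  monomials x^p, p a lattice point of P.  The field F_q is the finite type 'a.\<close>
definition num_zeros :: "nat \<Rightarrow> ((nat \<Rightarrow> 'a::{finite,field}) \<Rightarrow> 'a) \<Rightarrow> nat" where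
  "num_zeros n f = card {x \<in> torus n. f x = 0}"

definition max_zeros :: "'a::{finite,field} itself \<Rightarrow> nat \<Rightarrow> (nat \<Rightarrow> real) set \<Rightarrow> nat" where
  "max_zeros T n P =
     Max {num_zeros n (\<lambda>x::nat \<Rightarrow> 'a. \<Sum>p\<in>lat_pts n P. c p * monomial_eval n p x)
          | c. (\<exists>p\<in>lat_pts n P. c p \<noteq> 0)}"

definition toric_rate :: "nat \<Rightarrow> nat \<Rightarrow> (nat \<Rightarrow> real) set \<Rightarrow> real" where
  "toric_rate q n P = real (card (lat_pts n P)) / (real q - 1) ^ n"

definition toric_delta :: "'a::{finite,field} itself \<Rightarrow> nat \<Rightarrow> (nat \<Rightarrow> real) set \<Rightarrow> real" where
  "toric_delta T n P = ((real CARD('a) - 1) ^ n - real (max_zeros T n P)) / (real CARD('a) - 1) ^ n"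

definition toric_family :: "'a::{finite,field} itself \<Rightarrow> (nat \<Rightarrow> nat) \<Rightarrow> (nat \<Rightarrow> (nat \<Rightarrow> real) set) \<Rightarrow> bool" where
  "toric_family T n P \<longleftrightarrow>
     (\<forall>i. toric_polytope CARD('a) (n i) (P i)) \<and>
     filterlim n at_top sequentially \<and>
     convergent (\<lambda>i. toric_delta T (n i) (P i)) \<and>
     convergent (\<lambda>i. toric_rate CARD('a) (n i) (P i))"

end

theory Submission
  imports Defs
begin


lemma conv_hull_convex:
  assumes "x \<in> conv_hull V" "y \<in> conv_hull V" "0 \<le> s" "s \<le> 1"
  shows "(\<lambda>j. (1-s) * x j + s * y j) \<in> conv_hull V"
proof -
  obtain c1 where c1: "\<forall>v\<in>V. 0 \<le> c1 v" "sum c1 V = 1" "x = (\<lambda>j. \<Sum>v\<in>V. c1 v * v j)"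
    using assms(1) unfolding conv_hull_def by blast
  obtain c2 where c2: "\<forall>v\<in>V. 0 \<le> c2 v" "sum c2 V = 1" "y = (\<lambda>j. \<Sum>v\<in>V. c2 v * v j)"
    using assms(2) unfolding conv_hull_def by blast
  define c where "c = (\<lambda>v. (1-s) * c1 v + s * c2 v)"
  have "\<forall>v\<in>V. 0 \<le> c v" using c1(1) c2(1) assms(3,4) unfolding c_def by simp
  moreover have "sum c V = 1" unfolding c_def
    by (simp add: sum.distrib flip: sum_distrib_left add: c1(2) c2(2))
  moreover have "(\<lambda>j. (1-s) * x j + s * y j) = (\<lambda>j. \<Sum>v\<in>V. c v * v j)"
    unfolding c_def c1(3) c2(3)
    by (rule ext) (simp add: sum_distrib_left sum.distrib distrib_right mult.assoc)
  ultimately show ?thesis unfolding conv_hull_def by blast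
qed

lemma vertex_in_hull:
  assumes "finite V" "v \<in> V"
  shows "v \<in> conv_hull V"
proof -
  define c where "c = (\<lambda>w. if w = v then (1::real) else 0)"
  have "\<forall>w\<in>V. 0 \<le> c w" unfolding c_def by simp
  moreover have "sum c V = 1" unfolding c_def using assms by simp
  moreover have "v = (\<lambda>j. \<Sum>w\<in>V. c w * w j)"
  proof
    fix j
    have "(\<Sum>w\<in>V. c w * w j) = (\<Sum>w\<in>V. if w = v then v j else 0)"
      by (rule sum.cong) (auto simp: c_def)
    also have "\<dots> = v j" using assms by simp
    finally show "v j = (\<Sum>w\<in>V. c w * w j)" by simp
  qed
  ultimately show ?thesis unfolding conv_hull_def by blast
qed

lemma conv_hull_single: "conv_hull {z} = {z}"
  using vertex_in_hull[of "{z}" z] unfolding conv_hull_def by auto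

lemma conv_hull_two:
  assumes "a \<noteq> b"
  shows "conv_hull {a, b} = {(\<lambda>j. a j + s * (b j - a j)) | s. 0 \<le> s \<and> s \<le> 1}"
proof
  show "conv_hull {a, b} \<subseteq> {(\<lambda>j. a j + s * (b j - a j)) | s. 0 \<le> s \<and> s \<le> 1}"
  proof
    fix x assume "x \<in> conv_hull {a, b}"
    then obtain c where c: "0 \<le> c a" "0 \<le> c b" "c a + c b = 1" "x = (\<lambda>j. c a * a j + c b * b j)"
      unfolding conv_hull_def using assms by auto
    have ca: "c a = 1 - c b" using c(3) by simp
    have "x = (\<lambda>j. a j + c b * (b j - a j))"
      unfolding c(4) ca by (rule ext) (simp add: algebra_simps)
    then show "x \<in> {(\<lambda>j. a j + s * (b j - a j)) | s. 0 \<le> s \<and> s \<le> 1}" using c by auto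
  qed
next
  show "{(\<lambda>j. a j + s * (b j - a j)) | s. 0 \<le> s \<and> s \<le> 1} \<subseteq> conv_hull {a, b}"
  proof
    fix x assume "x \<in> {(\<lambda>j. a j + s * (b j - a j)) | s. 0 \<le> s \<and> s \<le> 1}"
    then obtain s where s: "0 \<le> s" "s \<le> 1" "x = (\<lambda>j. a j + s * (b j - a j))" by auto
    define c where "c = (\<lambda>w. if w = b then s else 1 - s)"
    have "\<forall>v\<in>{a,b}. 0 \<le> c v" using s assms unfolding c_def by auto
    moreover have "sum c {a,b} = 1" using assms unfolding c_def by simp
    moreover have "x = (\<lambda>j. \<Sum>v\<in>{a,b}. c v * v j)" using assms unfolding c_def s(3)
      by (intro ext) (simp add: algebra_simps)
    ultimately show "x \<in> conv_hull {a, b}" unfolding conv_hull_def by blast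
  qed
qed



lemma msum_n_seg:
  "msum_n (\<lambda>_. {(\<lambda>j. s * w j) | s. 0 \<le> s \<and> s \<le> (1::real)}) k
     = {(\<lambda>j. s * w j) | s. 0 \<le> s \<and> s \<le> real k}"
proof (induction k)
  case 0
  have "(\<lambda>j::nat. 0::real) \<in> {(\<lambda>j. s * w j) | s. 0 \<le> s \<and> s \<le> real 0}"
    by (rule CollectI, rule exI[of _ 0]) simp
  moreover have "{(\<lambda>j. s * w j) | s. 0 \<le> s \<and> s \<le> real 0} \<subseteq> {(\<lambda>j::nat. 0::real)}"
    by auto
  ultimately show ?case by auto
next
  case (Suc k)
  have "msum {(\<lambda>j. s * w j) | s. 0 \<le> s \<and> s \<le> real k} {(\<lambda>j. s * w j) | s. 0 \<le> s \<and> s \<le> 1}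
      = {(\<lambda>j. s * w j) | s. 0 \<le> s \<and> s \<le> real (Suc k)}" (is "?L = ?R")
  proof
    show "?L \<subseteq> ?R"
    proof
      fix x assume "x \<in> ?L"
      then obtain s r where sr: "0 \<le> s" "s \<le> real k" "0 \<le> r" "r \<le> 1"
        "x = (\<lambda>j. s * w j + r * w j)" unfolding msum_def by blast
      then have "x = (\<lambda>j. (s + r) * w j)" by (simp add: algebra_simps)
      then show "x \<in> ?R" using sr by auto
    qed
  next
    show "?R \<subseteq> ?L"
    proof
      fix x assume "x \<in> ?R"
      then obtain s where s: "0 \<le> s" "s \<le> real k + 1" "x = (\<lambda>j. s * w j)" by auto
      show "x \<in> ?L"
      proof (cases "s \<le> real k")
        case True
        have "x = (\<lambda>j. (\<lambda>j. s * w j) j + (\<lambda>j. 0 * w j) j)" using s by simp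
        then show ?thesis unfolding msum_def using s True by fastforce
      next
        case False
        have "x = (\<lambda>j. (\<lambda>j. real k * w j) j + (\<lambda>j. (s - real k) * w j) j)" using s
          by (simp add: algebra_simps)
        then show ?thesis unfolding msum_def using s False by fastforce
      qed
    qed
  qed
  then show ?case using Suc by simp
qed

lemma msum_single: "msum {a} T = {(\<lambda>j. a j + x j) | x. x \<in> T}"
  unfolding msum_def by auto

lemma msum_I: "x \<in> A \<Longrightarrow> y \<in> B \<Longrightarrow> (\<lambda>j. x j + y j) \<in> msum A B"
  unfolding msum_def by blast

lemma nonsing_pts:
  assumes "lattice_polytope d A" "\<not> (\<exists>x. A = {x})"
  shows "\<exists>a\<in>A. \<exists>b\<in>A. \<exists>i<d. a i - b i \<ge> 1"
proof -
  obtain V where V: "finite V" "V \<noteq> {}" "V \<subseteq> int_pts d" "A = conv_hull (rvec ` V)"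
    using assms(1) unfolding lattice_polytope_def by blast
  obtain u where u: "u \<in> V" using V(2) by blast
  have "\<exists>w\<in>V. w \<noteq> u"
  proof (rule ccontr)
    assume "\<not> ?thesis"
    then have "V = {u}" using u by blast
    then have "A = {rvec u}" using V(4) conv_hull_single by simp
    then show False using assms(2) by blast
  qed
  then obtain w where w: "w \<in> V" "w \<noteq> u" by blast
  have "\<exists>i. u i \<noteq> w i" using w(2) by (metis fun_eq_iff)
  then obtain i where i: "u i \<noteq> w i" by blast
  have "i < d"
  proof (rule ccontr)
    assume "\<not> i < d"
    then have "u i = 0" "w i = 0" using u w V(3) unfolding int_pts_def by auto
    then show False using i by simp
  qed
  have ru: "rvec u \<in> A" using vertex_in_hull[of "rvec ` V" "rvec u"] V(1,4) u by simp
  have rw: "rvec w \<in> A" using vertex_in_hull[of "rvec ` V" "rvec w"] V(1,4) w by simp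
  show ?thesis
  proof (cases "u i > w i")
    case True
    then have "rvec u i - rvec w i \<ge> 1" unfolding rvec_def by simp
    then show ?thesis using ru rw \<open>i < d\<close> by blast
  next
    case False
    then have "w i > u i" using i by simp
    then have "rvec w i - rvec u i \<ge> 1" unfolding rvec_def by simp
    then show ?thesis using ru rw \<open>i < d\<close> by blast
  qed
qed

lemma spread:
  assumes "\<forall>j<k. lattice_polytope d (Q j) \<and> \<not> (\<exists>x. Q j = {x})"
  shows "\<exists>f::nat \<Rightarrow> nat. (\<Sum>i<d. f i) = k \<and>
     (\<forall>i<d. \<exists>x\<in>msum_n Q k. \<exists>y\<in>msum_n Q k. x i - y i \<ge> real (f i))"
  using assms
proof (induction k)
  case 0
  show ?case by (rule exI[of _ "\<lambda>_. 0"]) auto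
next
  case (Suc k)
  then obtain f where f: "(\<Sum>i<d. f i) = k"
     "\<forall>i<d. \<exists>x\<in>msum_n Q k. \<exists>y\<in>msum_n Q k. x i - y i \<ge> real (f i)" by auto
  obtain a b i0 where ab: "a \<in> Q k" "b \<in> Q k" "i0 < d" "a i0 - b i0 \<ge> 1"
    using nonsing_pts Suc.prems by blast
  define g where "g = (\<lambda>i. if i = i0 then Suc (f i) else f i)"
  have "(\<Sum>i<d. g i) = Suc k"
  proof -
    have "(\<Sum>i<d. g i) = (\<Sum>i<d. f i + (if i = i0 then 1 else 0))"
      by (rule sum.cong) (auto simp: g_def)
    also have "\<dots> = k + 1" using ab(3) f(1) by (simp add: sum.distrib)
    finally show ?thesis by simp
  qed
  moreover have "\<forall>i<d. \<exists>x\<in>msum_n Q (Suc k). \<exists>y\<in>msum_n Q (Suc k). x i - y i \<ge> real (g i)"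
  proof (intro allI impI)
    fix i assume "i < d"
    then obtain x y where xy: "x \<in> msum_n Q k" "y \<in> msum_n Q k" "x i - y i \<ge> real (f i)"
      using f(2) by blast
    show "\<exists>x\<in>msum_n Q (Suc k). \<exists>y\<in>msum_n Q (Suc k). x i - y i \<ge> real (g i)"
    proof (cases "i = i0")
      case True
      have "(\<lambda>j. x j + a j) \<in> msum_n Q (Suc k)" "(\<lambda>j. y j + b j) \<in> msum_n Q (Suc k)"
        using xy ab by (auto intro: msum_I)
      moreover have "(x i + a i) - (y i + b i) \<ge> real (g i)"
        using xy(3) ab(4) True unfolding g_def by simp
      ultimately show ?thesis by force
    next
      case False
      have "(\<lambda>j. x j + a j) \<in> msum_n Q (Suc k)" "(\<lambda>j. y j + a j) \<in> msum_n Q (Suc k)"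
        using xy ab by (auto intro: msum_I)
      moreover have "(x i + a i) - (y i + a i) \<ge> real (g i)"
        using xy(3) False unfolding g_def by simp
      ultimately show ?thesis
        by (intro bexI[of _ "(\<lambda>j. x j + a j)"] bexI[of _ "(\<lambda>j. y j + a j)"]) auto
    qed
  qed
  ultimately show ?case by blast
qed

lemma mink_bound:
  assumes "\<forall>j<k. lattice_polytope d (Q j) \<and> \<not> (\<exists>x. Q j = {x})"
    and "\<forall>x\<in>msum {rvec t} (msum_n Q k). \<forall>i<d. 0 \<le> x i \<and> x i \<le> c"
  shows "real k \<le> real d * c"
proof -
  obtain f where f: "(\<Sum>i<d. f i) = k"
     "\<forall>i<d. \<exists>x\<in>msum_n Q k. \<exists>y\<in>msum_n Q k. x i - y i \<ge> real (f i)"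
    using spread[OF assms(1)] by blast
  have "\<forall>i<d. real (f i) \<le> c"
  proof (intro allI impI)
    fix i assume "i < d"
    then obtain x y where xy: "x \<in> msum_n Q k" "y \<in> msum_n Q k" "x i - y i \<ge> real (f i)"
      using f(2) by blast
    have "(\<lambda>j. rvec t j + x j) \<in> msum {rvec t} (msum_n Q k)"
         "(\<lambda>j. rvec t j + y j) \<in> msum {rvec t} (msum_n Q k)"
      using xy unfolding msum_def by auto
    then have "rvec t i + x i \<le> c" "0 \<le> rvec t i + y i" using assms(2) \<open>i < d\<close> by fastforce+
    then show "real (f i) \<le> c" using xy(3) by simp
  qed
  then have "(\<Sum>i<d. real (f i)) \<le> (\<Sum>i<d. c)" by (intro sum_mono) simp
  moreover have "real k = (\<Sum>i<d. real (f i))" using f(1) by (metis of_nat_sum)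
  ultimately show ?thesis by simp
qed



definition Kset :: "nat \<Rightarrow> (nat \<Rightarrow> real) set \<Rightarrow> nat set" where
  "Kset n P = {k. \<exists>Q t. t \<in> int_pts n \<and>
       (\<forall>j<k. lattice_polytope n (Q j) \<and> \<not> (\<exists>x. Q j = {x})) \<and>
       P = msum {rvec t} (msum_n Q k)}"

lemma mink_length_Kset: "mink_length n P = Max (Kset n P)"
  unfolding mink_length_def Kset_def by simp

lemma Kset_bound:
  assumes "toric_polytope q d P" "Q' \<subseteq> P" "k \<in> Kset d Q'" "q \<ge> 2"
  shows "k \<le> d * (q - 2)"
proof -
  obtain Q t where Qt: "\<forall>j<k. lattice_polytope d (Q j) \<and> \<not> (\<exists>x. Q j = {x})"
      "Q' = msum {rvec t} (msum_n Q k)"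
    using assms(3) unfolding Kset_def by blast
  have "\<forall>x\<in>msum {rvec t} (msum_n Q k). \<forall>i<d. 0 \<le> x i \<and> x i \<le> real q - 2"
    using assms(1,2) Qt(2) unfolding toric_polytope_def by blast
  then have "real k \<le> real d * (real q - 2)" using mink_bound[OF Qt(1)] by blast
  also have "\<dots> = real (d * (q - 2))" using assms(4) by (simp add: of_nat_diff)
  finally show ?thesis by linarith
qed

lemma mink_length_bound:
  assumes "toric_polytope q d P" "Q' \<subseteq> P" "q \<ge> 2"
  shows "mink_length d Q' \<in> {..d * (q - 2)} \<union> {Max ({}::nat set)}"
proof (cases "Kset d Q' = {}")
  case True
  then show ?thesis unfolding mink_length_Kset by simp
next
  case False
  have sub: "Kset d Q' \<subseteq> {..d * (q - 2)}" using Kset_bound[OF assms(1,2) _ assms(3)] by auto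
  then have "finite (Kset d Q')" using finite_subset by blast
  then have "Max (Kset d Q') \<in> Kset d Q'" using False by simp
  then show ?thesis unfolding mink_length_Kset using sub by blast
qed

lemma full_ge_mink:
  assumes "toric_polytope q d P" "q \<ge> 2" "lattice_polytope d Q" "Q \<subseteq> P"
  shows "mink_length d Q \<le> full_mink_length d P"
proof -
  let ?S = "{mink_length d Q | Q. lattice_polytope d Q \<and> Q \<subseteq> P}"
  have "?S \<subseteq> {..d * (q - 2)} \<union> {Max ({}::nat set)}"
    using mink_length_bound[OF assms(1) _ assms(2)] by blast
  then have "finite ?S" using finite_subset by blast
  moreover have "mink_length d Q \<in> ?S" using assms(3,4) by blast
  ultimately show ?thesis unfolding full_mink_length_def by (rule Max_ge)
qed

lemma mink_length_ge:
  assumes "toric_polytope q d P" "q \<ge> 2" "Q \<subseteq> P" "m \<in> Kset d Q"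
  shows "m \<le> mink_length d Q"
proof -
  have "Kset d Q \<subseteq> {..d * (q - 2)}" using Kset_bound[OF assms(1,3) _ assms(2)] by auto
  then have "finite (Kset d Q)" using finite_subset by blast
  then show ?thesis unfolding mink_length_Kset using assms(4) by (rule Max_ge)
qed



lemma seg_main:
  assumes tp: "toric_polytope q d P" and q3: "q \<ge> 3"
    and pP: "p \<in> lat_pts d P" and p'P: "p' \<in> lat_pts d P"
    and v: "v \<in> int_pts d" "v \<noteq> (\<lambda>_. 0)"
    and p': "p' = (\<lambda>j. p j + int (q - 2) * v j)"
  shows "q - 2 \<le> full_mink_length d P"
proof -
  define m where "m = q - 2"
  have m1: "real m \<ge> 1" using q3 unfolding m_def by simp
  define A where "A = rvec p"
  define B where "B = rvec p'"
  have BA: "\<And>j. B j - A j = real m * rvec v j"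
    unfolding A_def B_def p' rvec_def m_def by simp
  obtain j0 where j0: "v j0 \<noteq> 0" using v(2) by (metis fun_eq_iff)
  have rv0: "rvec v j0 \<noteq> 0" using j0 unfolding rvec_def by simp
  have AB: "A \<noteq> B"
  proof
    assume "A = B"
    then have "B j0 - A j0 = 0" by simp
    then show False using BA[of j0] rv0 m1 by simp
  qed
  define Q where "Q = conv_hull (rvec ` {p, p'})"
  have QAB: "Q = conv_hull {A, B}" unfolding Q_def A_def B_def by simp
  have Qform: "Q = {(\<lambda>j. A j + s * (B j - A j)) | s. 0 \<le> s \<and> s \<le> 1}"
    unfolding QAB by (rule conv_hull_two[OF AB])
  have pI: "p \<in> int_pts d" and p'I: "p' \<in> int_pts d"
    using pP p'P unfolding lat_pts_def by auto
  have latQ: "lattice_polytope d Q"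
    unfolding lattice_polytope_def Q_def
    by (rule exI[of _ "{p, p'}"]) (simp add: pI p'I)
  have "lattice_polytope d P" using tp by (simp add: toric_polytope_def)
  then obtain V0 where V0: "P = conv_hull (rvec ` V0)"
    unfolding lattice_polytope_def by blast
  have AP: "A \<in> P" and BP: "B \<in> P" using pP p'P unfolding lat_pts_def A_def B_def by auto
  have QP: "Q \<subseteq> P"
  proof
    fix x assume "x \<in> Q"
    then obtain s where s: "0 \<le> s" "s \<le> 1" "x = (\<lambda>j. A j + s * (B j - A j))"
      unfolding Qform by blast
    have xe: "x = (\<lambda>j. (1 - s) * A j + s * B j)" unfolding s(3) by (rule ext) (simp add: algebra_simps)
    have "(\<lambda>j. (1 - s) * A j + s * B j) \<in> conv_hull (rvec ` V0)"
      by (rule conv_hull_convex) (use AP BP s(1,2) V0 in auto)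
    then show "x \<in> P" unfolding xe V0 .
  qed
  define Sg where "Sg = conv_hull (rvec ` {(\<lambda>_. 0), v})"
  have r0: "rvec (\<lambda>_. 0) = (\<lambda>j. 0)" unfolding rvec_def by simp
  have nz: "(\<lambda>j. 0::real) \<noteq> rvec v"
  proof
    assume "(\<lambda>j. 0::real) = rvec v"
    from fun_cong[OF this, of j0] have "rvec v j0 = 0" by simp
    then show False using rv0 by simp
  qed
  have Sgform: "Sg = {(\<lambda>j. s * rvec v j) | s. 0 \<le> s \<and> s \<le> 1}"
    unfolding Sg_def using conv_hull_two[OF nz] r0 by simp
  have latSg: "lattice_polytope d Sg"
    unfolding lattice_polytope_def Sg_def
    by (rule exI[of _ "{(\<lambda>_. 0), v}"]) (use v(1) in \<open>simp add: int_pts_def\<close>)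
  have nsSg: "\<not> (\<exists>x. Sg = {x})"
  proof
    assume "\<exists>x. Sg = {x}"
    then obtain x where x: "Sg = {x}" by blast
    have "(\<lambda>j. 0 * rvec v j) \<in> Sg" unfolding Sgform
      by (rule CollectI, rule exI[of _ 0]) simp
    moreover have "(\<lambda>j. 1 * rvec v j) \<in> Sg" unfolding Sgform
      by (rule CollectI, rule exI[of _ 1]) simp
    ultimately have "(\<lambda>j. 0 * rvec v j) = (\<lambda>j. 1 * rvec v j)" using x by blast
    then have "(\<lambda>j. 0::real) = rvec v" by simp
    then show False using nz by simp
  qed
  have "Q = msum {rvec p} (msum_n (\<lambda>_. Sg) m)"
  proof -
    have "msum {rvec p} (msum_n (\<lambda>_. Sg) m) = {(\<lambda>j. A j + x j) | x. x \<in> {(\<lambda>j. s * rvec v j) | s. 0 \<le> s \<and> s \<le> real m}}"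
      unfolding Sgform msum_n_seg msum_single A_def ..
    also have "\<dots> = Q"
    proof
      show "{(\<lambda>j. A j + x j) | x. x \<in> {(\<lambda>j. s * rvec v j) | s. 0 \<le> s \<and> s \<le> real m}} \<subseteq> Q"
      proof
        fix y assume "y \<in> {(\<lambda>j. A j + x j) | x. x \<in> {(\<lambda>j. s * rvec v j) | s. 0 \<le> s \<and> s \<le> real m}}"
        then obtain s where s: "0 \<le> s" "s \<le> real m" "y = (\<lambda>j. A j + s * rvec v j)" by blast
        have "y = (\<lambda>j. A j + (s / real m) * (B j - A j))" unfolding s(3) BA using m1
          by (rule_tac ext) simp
        moreover have "0 \<le> s / real m" "s / real m \<le> 1" using s m1 by auto
        ultimately show "y \<in> Q" unfolding Qform by blast
      qed
    next
      show "Q \<subseteq> {(\<lambda>j. A j + x j) | x. x \<in> {(\<lambda>j. s * rvec v j) | s. 0 \<le> s \<and> s \<le> real m}}"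
      proof
        fix y assume "y \<in> Q"
        then obtain s where s: "0 \<le> s" "s \<le> 1" "y = (\<lambda>j. A j + s * (B j - A j))"
          unfolding Qform by blast
        have "y = (\<lambda>j. A j + (\<lambda>j. (s * real m) * rvec v j) j)" unfolding s(3) BA by (rule ext) simp
        moreover have "0 \<le> s * real m" "s * real m \<le> real m" using s m1
          by (auto simp: mult_le_cancel_right1)
        ultimately show "y \<in> {(\<lambda>j. A j + x j) | x. x \<in> {(\<lambda>j. s * rvec v j) | s. 0 \<le> s \<and> s \<le> real m}}"
          by (intro CollectI exI[of _ "\<lambda>j. (s * real m) * rvec v j"] conjI) (simp, rule exI[of _ "s * real m"], simp)
      qed
    qed
    finally show ?thesis by simp
  qed
  then have "m \<in> Kset d Q" unfolding Kset_def
    by (intro CollectI exI[of _ "\<lambda>_. Sg"] exI[of _ p]) (simp add: latSg nsSg pI)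
  then have "m \<le> mink_length d Q" using mink_length_ge[OF tp _ QP] q3 by simp
  also have "\<dots> \<le> full_mink_length d P" using full_ge_mink[OF tp _ latQ QP] q3 by simp
  finally show ?thesis unfolding m_def .
qed



lemma card_bound:
  assumes tp: "toric_polytope q d P" and q3: "q \<ge> 3"
    and L: "full_mink_length d P \<le> q - 3"
  shows "card (lat_pts d P) \<le> (q - 2) ^ d"
proof -
  define m where "m = q - 2"
  have mpos: "int m > 0" using q3 unfolding m_def by simp
  define g where "g = (\<lambda>(p::nat\<Rightarrow>int) j. p j mod int m)"
  have inj: "inj_on g (lat_pts d P)"
  proof (rule inj_onI, rule ccontr)
    fix p p' assume pP: "p \<in> lat_pts d P" and p'P: "p' \<in> lat_pts d P"
      and eq: "g p = g p'" and ne: "p \<noteq> p'"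
    define v where "v = (\<lambda>j. (p' j - p j) div int m)"
    have dv: "\<And>j. int m dvd (p' j - p j)"
    proof -
      fix j
      have "p' j mod int m = p j mod int m" using fun_cong[OF eq, of j] unfolding g_def by simp
      then show "int m dvd (p' j - p j)" by (simp add: mod_eq_dvd_iff)
    qed
    have p'e: "p' = (\<lambda>j. p j + int (q - 2) * v j)"
    proof
      fix j show "p' j = p j + int (q - 2) * v j"
        using dv[of j] unfolding v_def m_def[symmetric] by (simp add: dvd_mult_div_cancel)
    qed
    have pI: "p \<in> int_pts d" and p'I: "p' \<in> int_pts d"
      using pP p'P unfolding lat_pts_def by auto
    have vI: "v \<in> int_pts d" using pI p'I unfolding int_pts_def v_def by simp
    have vnz: "v \<noteq> (\<lambda>_. 0)"
    proof
      assume "v = (\<lambda>_. 0)"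
      then have "\<And>j. p' j = p j" using p'e by simp
      then have "p' = p" by (simp add: fun_eq_iff)
      then show False using ne by simp
    qed
    have "q - 2 \<le> full_mink_length d P" by (rule seg_main[OF tp q3 pP p'P vI vnz p'e])
    then show False using L q3 by simp
  qed
  define T where "T = {f::nat\<Rightarrow>int. (\<forall>j<d. f j \<in> {0..<int m}) \<and> (\<forall>j\<ge>d. f j = 0)}"
  define h where "h = (\<lambda>(f::nat\<Rightarrow>int) j. if j < d then f j else 0)"
  have img: "g ` lat_pts d P \<subseteq> T"
  proof
    fix y assume "y \<in> g ` lat_pts d P"
    then obtain p where p: "p \<in> lat_pts d P" "y = g p" by blast
    have "\<forall>j\<ge>d. p j = 0" using p(1) unfolding lat_pts_def int_pts_def by simp
    then show "y \<in> T" unfolding T_def p(2) g_def using mpos by simp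
  qed
  have TPi: "T \<subseteq> h ` (PiE {..<d} (\<lambda>_. {0..<int m}))"
  proof
    fix f assume f: "f \<in> T"
    have "f = h (restrict f {..<d})"
      using f unfolding T_def h_def by (auto simp: fun_eq_iff)
    moreover have "restrict f {..<d} \<in> PiE {..<d} (\<lambda>_. {0..<int m})"
      using f unfolding T_def by auto
    ultimately show "f \<in> h ` (PiE {..<d} (\<lambda>_. {0..<int m}))" by blast
  qed
  have finPi: "finite (PiE {..<d} (\<lambda>_. {0..<int m}))" by (simp add: finite_PiE)
  have cPi: "card (PiE {..<d} (\<lambda>_. {0..<int m})) = m ^ d" by (simp add: card_PiE)
  have finT: "finite T" using finite_subset[OF TPi] finPi by blast
  have "card (lat_pts d P) = card (g ` lat_pts d P)" using card_image[OF inj] by simp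
  also have "\<dots> \<le> card T" by (rule card_mono[OF finT img])
  also have "\<dots> \<le> card (h ` (PiE {..<d} (\<lambda>_. {0..<int m})))"
    by (rule card_mono[OF _ TPi]) (simp add: finPi)
  also have "\<dots> \<le> m ^ d" using card_image_le[OF finPi, of h] cPi by simp
  finally show ?thesis unfolding m_def .
qed

theorem mainTheorem15:
  fixes n :: "nat \<Rightarrow> nat" and P :: "nat \<Rightarrow> (nat \<Rightarrow> real) set"
  assumes "CARD('a::{finite,field}) \<ge> 3"
    and "toric_family TYPE('a) n P"
    and "\<exists>I. \<forall>i\<ge>I. full_mink_length (n i) (P i) \<le> CARD('a) - 3"
  shows "(\<lambda>i. toric_rate CARD('a) (n i) (P i)) \<longlonglongrightarrow> 0"
proof -
  let ?q = "CARD('a)"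
  define r where "r = (real ?q - 2) / (real ?q - 1)"
  have r: "0 \<le> r" "r < 1" using assms(1) unfolding r_def by auto
  obtain I where I: "\<forall>i\<ge>I. full_mink_length (n i) (P i) \<le> ?q - 3" using assms(3) by blast
  have tp: "\<And>i. toric_polytope ?q (n i) (P i)" and nlim: "filterlim n at_top sequentially"
    using assms(2) unfolding toric_family_def by auto
  have lim: "(\<lambda>i. r ^ (n i)) \<longlonglongrightarrow> 0"
  proof -
    have "norm r < 1" using r by simp
    from filterlim_compose[OF LIMSEQ_power_zero[OF this] nlim] show ?thesis by (simp add: o_def)
  qed
  have le: "\<forall>\<^sub>F i in sequentially. toric_rate ?q (n i) (P i) \<le> r ^ (n i)"
  proof (rule eventually_sequentiallyI[of I])
    fix i assume "I \<le> i"
    then have c: "card (lat_pts (n i) (P i)) \<le> (?q - 2) ^ (n i)"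
      using card_bound[OF tp assms(1)] I by blast
    have pos: "(real ?q - 1) ^ n i > 0" using assms(1) by simp
    have "real (card (lat_pts (n i) (P i))) \<le> real ((?q - 2) ^ (n i))" using c by linarith
    also have "\<dots> = (real ?q - 2) ^ (n i)" using assms(1) by (simp add: of_nat_diff)
    finally have "real (card (lat_pts (n i) (P i))) / (real ?q - 1) ^ n i
        \<le> (real ?q - 2) ^ (n i) / (real ?q - 1) ^ n i"
      using pos by (simp add: divide_right_mono)
    then show "toric_rate ?q (n i) (P i) \<le> r ^ (n i)"
      unfolding toric_rate_def r_def by (simp add: power_divide)
  qed
  have ge: "\<forall>\<^sub>F i in sequentially. 0 \<le> toric_rate ?q (n i) (P i)"
    using assms(1) unfolding toric_rate_def by simp
  show ?thesis by (rule tendsto_sandwich[OF ge le tendsto_const lim])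
qed

end
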